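(* Let $S=S'\wedge C$ be a scheduling problem on $n$ elements where $C$ is a contractible clause, let $V(C)=O_1\uplus\cdots\uplus O_k$ be the decomposition into $\sim_C$ equivalence classes ordered so that $O_i>O_j$ for $i<j$, and let $r_i=|O_i|-1$. Then $$\mathcal{S}_{S'\wedge\neg C}=\left(\mathcal{S}_{S'\downarrow_{(r_1,\dots,r_k)}}\right)\uparrow^{(r_1,\dots,r_k)}.$$
   Context: A scheduling problem on $n$ elements is a Boolean formula over atoms $(x_i\le x_j)$, $i,j\in[n]$, with $(x_i=x_j)=(x_i\le x_j)\wedge(x_j\le x_i)$ and $(x_i\ne x_j)=\neg(x_i=x_j)$. A solution is $f:[n]\to\mathbb{P}=\{1,2,\dots\}$ making it true with $x_i=f(i)$; $\mathcal{S}_S=\sum_f y_{f(1)}\cdots y_{f(n)}$ over solutions, in noncommuting variables $y_1,y_2,\dots$. A formula $C$ given as $C=\bigvee_{(i,j)\in I}(x_i\ne x_j)$ with $I\subseteq[n]\times[n]$ is edge-like; $V(C)$ is the set of indices $i$ with $x_i$ appearing in $C$, and $\sim_C$ is the equivalence relation on $V(C)$ generated by $i\sim j$ for $(i,j)\in I$. For disjoint sets, $A>B$ means $a>b$ for all $a\in A,b\in B$. $C$ is a contractible clause if it is edge-like, $V(C)=\{m,m+1,\dots,n\}$ for some $1\le m\le n$, and the $\sim_C$ classes can be ordered $O_1,\dots,O_k$ with $O_i>O_j$ for $i<j$. With $r=\sum_i r_i$, the contraction $S'\downarrow_{(r_1,\dots,r_k)}$ is the scheduling problem on $n-r$ elements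 obtained from $S'$ by replacing each variable $x_j$ by $x_{\psi(j)}$, where $\psi(j)=j$ for $j<m$ and $\psi(j)=m+k-i$ for $j\in O_i$ (i.e. each class is identified to one variable and indices are standardized to $[n-r]$ preserving order). Induction: for nonnegative integers $r_1,\dots,r_k$ and a monomial $y_{i_1}\cdots y_{i_p}$ with $k\le p$, $y_{i_1}\cdots y_{i_p}\uparrow^{(r_1,\dots,r_k)}=y_{i_1}\cdots y_{i_{p-k}}y_{i_{p-k+1}}^{1+r_k}\cdots y_{i_p}^{1+r_1}$, extended linearly (termwise). *)

theory Defs
  imports Main
begin

text \<open>Boolean formulas over atoms (x_i \<le> x_j); indices are 1-based naturals.\<close>
datatype sform = Tru | Fls | Atom nat nat | Neg sform | Conj sform sform | Disj sform sform

fun holds :: "(nat \<Rightarrow> nat) \<Rightarrow> sform \<Rightarrow> bool" where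
  "holds f Tru = True"
| "holds f Fls = False"
| "holds f (Atom i j) = (f i \<le> f j)"
| "holds f (Neg a) = (\<not> holds f a)"
| "holds f (Conj a b) = (holds f a \<and> holds f b)"
| "holds f (Disj a b) = (holds f a \<or> holds f b)"

fun vars :: "sform \<Rightarrow> nat set" where
  "vars Tru = {}"
| "vars Fls = {}"
| "vars (Atom i j) = {i, j}"
| "vars (Neg a) = vars a"
| "vars (Conj a b) = vars a \<union> vars b"
| "vars (Disj a b) = vars a \<union> vars b"

definition sched_on :: "nat \<Rightarrow> sform \<Rightarrow> bool" where
  "sched_on n S \<longleftrightarrow> vars S \<subseteq> {1..n}"

fun rename :: "(nat \<Rightarrow> nat) \<Rightarrow> sform \<Rightarrow> sform" where
  "rename \<psi> Tru = Tru"
| "rename \<psi> Fls = Fls"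
| "rename \<psi> (Atom i j) = Atom (\<psi> i) (\<psi> j)"
| "rename \<psi> (Neg a) = Neg (rename \<psi> a)"
| "rename \<psi> (Conj a b) = Conj (rename \<psi> a) (rename \<psi> b)"
| "rename \<psi> (Disj a b) = Disj (rename \<psi> a) (rename \<psi> b)"

definition Eq :: "nat \<Rightarrow> nat \<Rightarrow> sform" where
  "Eq i j = Conj (Atom i j) (Atom j i)"

definition Neq :: "nat \<Rightarrow> nat \<Rightarrow> sform" where
  "Neq i j = Neg (Eq i j)"

text \<open>A noncommutative series in y_1, y_2, ... is represented by its coefficient
  function on words: the word [a_1,...,a_p] stands for the monomial y_(a_1)...y_(a_p).
  The solution f : [n] \<rightarrow> P corresponds to the word [f 1, ..., f n].\<close>
type_synonym ncseries = "nat list \<Rightarrow> nat"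

definition gf :: "nat \<Rightarrow> sform \<Rightarrow> ncseries" where
  "gf n S w = (if length w = n \<and> (\<forall>a\<in>set w. 0 < a) \<and> holds (\<lambda>i. w ! (i - 1)) S
               then 1 else 0)"

definition edge_clause :: "(nat \<times> nat) list \<Rightarrow> sform" where
  "edge_clause I = foldr (\<lambda>(i, j) acc. Disj (Neq i j) acc) I Fls"

definition Vc :: "(nat \<times> nat) list \<Rightarrow> nat set" where
  "Vc I = fst ` set I \<union> snd ` set I"

definition simC :: "(nat \<times> nat) list \<Rightarrow> (nat \<times> nat) set" where
  "simC I = (set I \<union> (set I)\<inverse>)\<^sup>* \<inter> (Vc I \<times> Vc I)"

definition ordered_classes :: "(nat \<times> nat) list \<Rightarrow> nat \<Rightarrow> (nat \<Rightarrow> nat set) \<Rightarrow> bool" where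
  "ordered_classes I k Cls \<longleftrightarrow>
     Cls ` {1..k} = Vc I // simC I \<and>
     (\<forall>i j. 1 \<le> i \<longrightarrow> i < j \<longrightarrow> j \<le> k \<longrightarrow> (\<forall>a\<in>Cls i. \<forall>b\<in>Cls j. b < a))"

definition contractible :: "(nat \<times> nat) list \<Rightarrow> nat \<Rightarrow> bool" where
  "contractible I n \<longleftrightarrow>
     (\<exists>m. 1 \<le> m \<and> m \<le> n \<and> Vc I = {m..n}) \<and> (\<exists>k Cls. ordered_classes I k Cls)"

definition contract_map :: "nat \<Rightarrow> nat \<Rightarrow> (nat \<Rightarrow> nat set) \<Rightarrow> nat \<Rightarrow> nat" where
  "contract_map m k Cls j = (if j < m then j else m + k - (THE i. i \<in> {1..k} \<and> j \<in> Cls i))"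

definition contraction :: "nat \<Rightarrow> nat \<Rightarrow> (nat \<Rightarrow> nat set) \<Rightarrow> sform \<Rightarrow> sform" where
  "contraction m k Cls S = rename (contract_map m k Cls) S"

text \<open>y_(i_1)...y_(i_p) \<up> (r_1..r_k) =
  y_(i_1)...y_(i_(p-k)) y_(i_(p-k+1))^(1+r_k) ... y_(i_p)^(1+r_1).\<close>
definition ind_word :: "nat \<Rightarrow> (nat \<Rightarrow> nat) \<Rightarrow> nat list \<Rightarrow> nat list" where
  "ind_word k r w =
     take (length w - k) w @
     concat (map (\<lambda>j. replicate (1 + r (k - j)) (w ! (length w - k + j))) [0..<k])"

definition induce :: "nat \<Rightarrow> (nat \<Rightarrow> nat) \<Rightarrow> ncseries \<Rightarrow> ncseries" where
  "induce k r G u = (\<Sum>w \<in> {w. k \<le> length w \<and> ind_word k r w = u}. G w)"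

end

theory Submission
  imports Defs
begin

lemma holds_rename: "holds f (rename \<psi> S) = holds (f \<circ> \<psi>) S"
  by (induction S) auto

lemma holds_cong: "(\<forall>i\<in>vars S. f i = g i) \<Longrightarrow> holds f S = holds g S"
  by (induction S) auto

lemma holds_edge: "holds f (edge_clause I) \<longleftrightarrow> (\<exists>(a,b)\<in>set I. f a \<noteq> f b)"
  by (induction I) (auto simp: edge_clause_def Neq_def Eq_def)

lemma concat_upt_sum:
  "concat (map (\<lambda>j. [a + (\<Sum>t<j. c t)..<a + (\<Sum>t<Suc j. c t)]) [0..<k]) = [a..<a + (\<Sum>t<k. c t)]"
proof (induction k)
  case 0 then show ?case by simp
next
  case (Suc k)
  have "[a..<a + (\<Sum>t<Suc k. c t)] = [a..<a + (\<Sum>t<k. c t)] @ [a + (\<Sum>t<k. c t)..<a + (\<Sum>t<Suc k. c t)]"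
    using upt_add_eq_append[of a "a + (\<Sum>t<k. c t)" "c k"] by (simp add: add.assoc)
  then show ?case using Suc by simp
qed

lemma length_concat_ge: "\<forall>xs\<in>set xss. xs \<noteq> [] \<Longrightarrow> length xss \<le> length (concat xss)"
proof (induction xss)
  case Nil then show ?case by simp
next
  case (Cons x xss) then show ?case by (cases x) auto
qed

lemma ind_word_length: "k \<le> length w \<Longrightarrow> length w \<le> length (ind_word k r w)"
proof -
  assume k: "k \<le> length w"
  have "k \<le> length (concat (map (\<lambda>j. replicate (1 + r (k - j)) (w ! (length w - k + j))) [0..<k]))"
    using length_concat_ge[of "map (\<lambda>j. replicate (1 + r (k - j)) (w ! (length w - k + j))) [0..<k]"]
    by auto
  then show ?thesis using k unfolding ind_word_def by simp
qed

lemma ind_word_set: "k \<le> length w \<Longrightarrow> set w \<subseteq> set (ind_word k r w)"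
proof
  fix x assume k: "k \<le> length w" and "x \<in> set w"
  then obtain p where p: "p < length w" "x = w ! p" by (auto simp: in_set_conv_nth)
  show "x \<in> set (ind_word k r w)"
  proof (cases "p < length w - k")
    case True
    then have "x \<in> set (take (length w - k) w)" using p by (auto simp: in_set_conv_nth)
    then show ?thesis unfolding ind_word_def by auto
  next
    case False
    define j where "j = p - (length w - k)"
    have j: "j < k" "p = length w - k + j" using False p k unfolding j_def by auto
    have "x \<in> set (replicate (1 + r (k - j)) (w ! (length w - k + j)))" using j p by simp
    then have "x \<in> set (concat (map (\<lambda>j. replicate (1 + r (k - j)) (w ! (length w - k + j))) [0..<k]))"
      using j(1) by fastforce
    then show ?thesis unfolding ind_word_def by auto
  qed
qed

lemma ind_word_finite: "finite {w. k \<le> length w \<and> ind_word k r w = u}"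
proof (rule finite_subset)
  show "{w. k \<le> length w \<and> ind_word k r w = u} \<subseteq> {w. set w \<subseteq> set u \<and> length w \<le> length u}"
    using ind_word_set ind_word_length by blast
  show "finite {w. set w \<subseteq> set u \<and> length w \<le> length u}"
    by (rule finite_lists_length_le) simp
qed

lemma map_upt_nth1: "i \<in> {1..n} \<Longrightarrow> map f [1..<n+1] ! (i - 1) = f i"
proof -
  assume i: "i \<in> {1..n}"
  have "i - 1 < length [1..<n+1]" using i by auto
  moreover have "[1..<n+1] ! (i - 1) = i" using i by (subst nth_upt) auto
  ultimately show ?thesis by simp
qed

lemma equiv_simC: "equiv (Vc I) (simC I)"
proof (rule equivI)
  show "refl_on (Vc I) (simC I)" unfolding refl_on_def simC_def by auto
  show "sym (simC I)" unfolding simC_def sym_def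
    by (auto simp: sym_rtrancl[OF sym_Un_converse, unfolded sym_def])
  show "trans (simC I)" unfolding simC_def trans_def
    by (auto intro: rtrancl_trans)
qed (auto simp: simC_def)

lemma path_eq:
  assumes "(x,y) \<in> (set I \<union> (set I)\<inverse>)\<^sup>*" and "\<forall>(a,b)\<in>set I. f a = f b"
  shows "f x = f y"
  using assms(1)
proof (induction rule: rtrancl_induct)
  case base then show ?case by simp
next
  case (step y z) then show ?case using assms(2) by auto
qed

locale cset =
  fixes n m k :: nat and I :: "(nat \<times> nat) list" and Cls :: "nat \<Rightarrow> nat set"
  assumes V: "Vc I = {m..n}" and m1: "1 \<le> m" and mn: "m \<le> n"
    and oc: "ordered_classes I k Cls"
begin

lemma cls_q: "i \<in> {1..k} \<Longrightarrow> Cls i \<in> Vc I // simC I"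
  using oc unfolding ordered_classes_def by auto

lemma ord: "1 \<le> i \<Longrightarrow> i < j \<Longrightarrow> j \<le> k \<Longrightarrow> a \<in> Cls i \<Longrightarrow> b \<in> Cls j \<Longrightarrow> b < a"
  using oc unfolding ordered_classes_def by auto

lemma ne: "i \<in> {1..k} \<Longrightarrow> Cls i \<noteq> {}"
  using cls_q equiv_simC in_quotient_imp_non_empty by blast

lemma sub: "i \<in> {1..k} \<Longrightarrow> Cls i \<subseteq> {m..n}"
  using cls_q equiv_simC in_quotient_imp_subset V by blast

lemma union: "\<Union>(Cls ` {1..k}) = {m..n}"
  using oc Union_quotient[OF equiv_simC] V unfolding ordered_classes_def by metis

lemma cover: "x \<in> {m..n} \<Longrightarrow> \<exists>i\<in>{1..k}. x \<in> Cls i"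
  using union by blast

lemma uniq: "i \<in> {1..k} \<Longrightarrow> j \<in> {1..k} \<Longrightarrow> x \<in> Cls i \<Longrightarrow> x \<in> Cls j \<Longrightarrow> i = j"
  using ord[of i j x x] ord[of j i x x] by (cases i j rule: linorder_cases) auto

lemma k1: "1 \<le> k"
  using cover[of m] mn by auto

lemma psi: "i \<in> {1..k} \<Longrightarrow> x \<in> Cls i \<Longrightarrow> contract_map m k Cls x = m + k - i"
proof -
  assume i: "i \<in> {1..k}" and x: "x \<in> Cls i"
  have "x \<ge> m" using sub[OF i] x by auto
  moreover have "(THE i. i \<in> {1..k} \<and> x \<in> Cls i) = i"
    using i x uniq by blast
  ultimately show ?thesis unfolding contract_map_def by simp
qed

lemma psi_low: "x < m \<Longrightarrow> contract_map m k Cls x = x"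
  unfolding contract_map_def by simp

lemma same_class: "i \<in> {1..k} \<Longrightarrow> x \<in> Cls i \<Longrightarrow> y \<in> Cls i \<Longrightarrow> (x,y) \<in> (set I \<union> (set I)\<inverse>)\<^sup>*"
proof -
  assume i: "i \<in> {1..k}" and x: "x \<in> Cls i" and y: "y \<in> Cls i"
  from cls_q[OF i] obtain z where z: "Cls i = simC I `` {z}" by (auto elim: quotientE)
  have "(z,x) \<in> simC I" "(z,y) \<in> simC I" using x y z by auto
  then have "(x,y) \<in> simC I" using equiv_simC unfolding equiv_def sym_def trans_def by blast
  then show ?thesis unfolding simC_def by auto
qed

lemma edge_class: "(a,b) \<in> set I \<Longrightarrow> \<exists>i\<in>{1..k}. a \<in> Cls i \<and> b \<in> Cls i"
proof -
  assume ab: "(a,b) \<in> set I"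
  then have a: "a \<in> {m..n}" using V unfolding Vc_def by force
  then obtain i where i: "i \<in> {1..k}" "a \<in> Cls i" using cover by blast
  from cls_q[OF i(1)] obtain z where z: "Cls i = simC I `` {z}" by (auto elim: quotientE)
  have "(a,b) \<in> simC I" using ab unfolding simC_def Vc_def by force
  moreover have "(z,a) \<in> simC I" using i z by auto
  ultimately have "(z,b) \<in> simC I" using equiv_simC unfolding equiv_def trans_def by blast
  then show ?thesis using i z by auto
qed

definition s :: "nat \<Rightarrow> nat" where "s j = m + (\<Sum>t<j. card (Cls (k - t)))"

lemma s_Suc: "s (Suc j) = s j + card (Cls (k - j))"
  unfolding s_def by simp

lemma intervals_aux:
  "j \<le> k \<Longrightarrow> (\<Union>t\<in>{..<j}. Cls (k - t)) = {m..<s j} \<and> (\<forall>t<j. Cls (k - t) = {s t..<s (Suc t)})"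
proof (induction j)
  case 0 then show ?case by (simp add: s_def)
next
  case (Suc j)
  then have j: "j < k" and IH1: "(\<Union>t\<in>{..<j}. Cls (k - t)) = {m..<s j}"
    and IH2: "\<forall>t<j. Cls (k - t) = {s t..<s (Suc t)}" by auto
  define C where "C = Cls (k - j)"
  have kj: "k - j \<in> {1..k}" using j by auto
  have inU: "y \<in> Cls i \<Longrightarrow> i \<in> {1..k} \<Longrightarrow> k - j < i \<Longrightarrow> y < s j" for y i
  proof -
    assume "y \<in> Cls i" "i \<in> {1..k}" "k - j < i"
    then have "y \<in> (\<Union>t\<in>{..<j}. Cls (k - t))"
      by (intro UN_I[of "k - i"]) auto
    then show ?thesis using IH1 by auto
  qed
  have C1: "C \<subseteq> {s j..n}"
  proof
    fix x assume x: "x \<in> C"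
    then have xm: "x \<in> {m..n}" using sub[OF kj] C_def by auto
    have "\<not> x < s j"
    proof
      assume "x < s j"
      then have "x \<in> (\<Union>t\<in>{..<j}. Cls (k - t))" using IH1 xm by auto
      then obtain t where t: "t < j" "x \<in> Cls (k - t)" by auto
      have "k - j < k - t" "1 \<le> k - j" "k - t \<le> k" using t j by auto
      then show False using ord[of "k - j" "k - t" x x] t x C_def by auto
    qed
    then show "x \<in> {s j..n}" using xm by auto
  qed
  have down: "y \<in> C" if y: "y \<in> {s j..n}" and x: "x \<in> C" and yx: "y \<le> x" for x y
  proof -
    have "y \<in> {m..n}" using y unfolding s_def by auto
    then obtain i where i: "i \<in> {1..k}" "y \<in> Cls i" using cover by blast
    have "\<not> k - j < i" using inU[OF i(2) i(1)] y by auto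
    moreover have "\<not> i < k - j" using ord[of i "k - j" y x] i x yx C_def j by auto
    ultimately show ?thesis using i C_def by (metis linorder_neqE_nat)
  qed
  have fin: "finite C" using C1 finite_subset by blast
  have neC: "C \<noteq> {}" using ne[OF kj] C_def by simp
  define M where "M = Max C"
  have MC: "M \<in> C" using fin neC M_def by simp
  have "C = {s j..M}"
  proof
    show "C \<subseteq> {s j..M}" using C1 fin M_def by auto
    show "{s j..M} \<subseteq> C" using down[OF _ MC] C1 MC by auto
  qed
  moreover have "s (Suc j) = M + 1"
  proof -
    have "card C = M + 1 - s j" using calculation by simp
    moreover have "s j \<le> M" using C1 MC by auto
    ultimately show ?thesis using s_Suc[of j] C_def by simp
  qed
  ultimately have Ceq: "C = {s j..<s (Suc j)}" by auto
  have "(\<Union>t\<in>{..<Suc j}. Cls (k - t)) = (\<Union>t\<in>{..<j}. Cls (k - t)) \<union> C"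
    unfolding C_def lessThan_Suc by auto
  also have "\<dots> = {m..<s (Suc j)}" using IH1 Ceq s_Suc[of j] unfolding s_def by auto
  finally show ?case using IH2 Ceq C_def less_Suc_eq by auto
qed

lemma intervals: "j < k \<Longrightarrow> Cls (k - j) = {s j..<s (Suc j)}"
  using intervals_aux[of k] by auto

lemma s_k: "s k = n + 1"
proof -
  have "(\<Union>t\<in>{..<k}. Cls (k - t)) = \<Union>(Cls ` {1..k})"
  proof -
    have "(\<lambda>t. k - t) ` {..<k} = {1..k}"
    proof
      show "(\<lambda>t. k - t) ` {..<k} \<subseteq> {1..k}" by auto
      show "{1..k} \<subseteq> (\<lambda>t. k - t) ` {..<k}"
      proof
        fix i assume "i \<in> {1..k}" then show "i \<in> (\<lambda>t. k - t) ` {..<k}"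
          by (intro image_eqI[of _ _ "k - i"]) auto
      qed
    qed
    then show ?thesis by (metis image_image)
  qed
  then have "{m..<s k} = {m..n}" using intervals_aux[of k] union by auto
  then have eq: "\<And>x. (m \<le> x \<and> x < s k) = (m \<le> x \<and> x \<le> n)" by (simp add: set_eq_iff)
  have "n < s k" using eq[of n] mn by simp
  moreover have "\<not> n + 1 < s k" using eq[of "n+1"] mn by simp
  ultimately show ?thesis by simp
qed

abbreviation "psi \<equiv> contract_map m k Cls"
abbreviation "rr \<equiv> (\<lambda>i. card (Cls i) - 1)"

lemma sum_c_ge: "k \<le> (\<Sum>t<k. card (Cls (k - t)))"
proof -
  have "(\<Sum>t<k. 1) \<le> (\<Sum>t<k. card (Cls (k - t)))"
  proof (rule sum_mono)
    fix t assume "t \<in> {..<k}"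
    then have "k - t \<in> {1..k}" by auto
    then have "Cls (k - t) \<noteq> {}" "finite (Cls (k - t))" using ne sub finite_subset by blast+
    then show "1 \<le> card (Cls (k - t))" by (simp add: Suc_le_eq card_gt_0_iff)
  qed
  then show ?thesis by simp
qed

lemma Nprime: "n - (\<Sum>i=1..k. card (Cls i) - 1) = m + k - 1"
proof -
  have "(\<Sum>i=1..k. card (Cls i) - 1) = (\<Sum>t<k. card (Cls (k - t)) - 1)"
    by (rule sum.reindex_bij_witness[of _ "\<lambda>i. k - i" "\<lambda>t. k - t"]) auto
  also have "\<dots> = (\<Sum>t<k. card (Cls (k - t))) - (\<Sum>t<k. 1)"
  proof (rule sum_subtractf_nat)
    fix t assume "t \<in> {..<k}"
    then have "k - t \<in> {1..k}" by auto
    then have "Cls (k - t) \<noteq> {}" "finite (Cls (k - t))" using ne sub finite_subset by blast+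
    then show "1 \<le> card (Cls (k - t))" by (simp add: Suc_le_eq card_gt_0_iff)
  qed
  also have "(\<Sum>t<k. card (Cls (k - t))) = n + 1 - m" using s_k unfolding s_def by simp
  finally show ?thesis using sum_c_ge s_k mn k1 unfolding s_def by simp
qed

lemma psi_range: "i \<in> {1..n} \<Longrightarrow> psi i \<in> {1..m + k - 1}"
proof (cases "i < m")
  case True then show "psi i \<in> {1..m + k - 1}" if "i \<in> {1..n}" using that psi_low k1 by auto
next
  case False
  assume "i \<in> {1..n}"
  then have "i \<in> {m..n}" using False by auto
  then obtain j where j: "j \<in> {1..k}" "i \<in> Cls j" using cover by blast
  then show ?thesis using psi[OF j] m1 by auto
qed

lemma psi_surj: "p \<in> {1..m + k - 1} \<Longrightarrow> \<exists>i\<in>{1..n}. psi i = p"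
proof (cases "p < m")
  case True
  assume "p \<in> {1..m + k - 1}"
  then show ?thesis using True psi_low[of p] mn by (intro bexI[of _ p]) auto
next
  case False
  assume p: "p \<in> {1..m + k - 1}"
  define j where "j = m + k - p"
  have j: "j \<in> {1..k}" using p False unfolding j_def by auto
  then obtain x where x: "x \<in> Cls j" using ne by blast
  have "psi x = p" using psi[OF j x] p False unfolding j_def by auto
  moreover have "x \<in> {1..n}" using sub[OF j] x m1 by auto
  ultimately show ?thesis by blast
qed

lemma ind_word_eq:
  assumes len: "length w = m + k - 1"
  shows "ind_word k rr w = map (\<lambda>i. w ! (psi i - 1)) [1..<n+1]"
proof -
  let ?g = "\<lambda>i. w ! (psi i - 1)"
  have split: "[1..<n+1] = [1..<m] @ [m..<n+1]"
    using upt_add_eq_append[of 1 m "n+1-m"] m1 mn by simp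
  have p1: "map ?g [1..<m] = take (length w - k) w"
  proof (rule nth_equalityI)
    show "length (map ?g [1..<m]) = length (take (length w - k) w)" using len k1 by simp
    fix p assume "p < length (map ?g [1..<m])"
    then have p: "p < m - 1" by simp
    then show "map ?g [1..<m] ! p = take (length w - k) w ! p"
      using psi_low[of "p+1"] len by (simp add: nth_upt)
  qed
  have "[m..<n+1] = [s 0..<s k]" using s_k by (simp add: s_def)
  also have "\<dots> = concat (map (\<lambda>j. [s j..<s (Suc j)]) [0..<k])"
    unfolding s_def using concat_upt_sum[of m "\<lambda>t. card (Cls (k-t))" k] by simp
  finally have mid: "[m..<n+1] = concat (map (\<lambda>j. [s j..<s (Suc j)]) [0..<k])" .
  have blocks: "map ?g [s j..<s (Suc j)] = replicate (1 + rr (k - j)) (w ! (length w - k + j))"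
    if j: "j \<in> set [0..<k]" for j
  proof -
    have jk: "j < k" using j by simp
    have kj: "k - j \<in> {1..k}" using jk by auto
    have I: "Cls (k - j) = {s j..<s (Suc j)}" using intervals[OF jk] .
    have cne: "Cls (k - j) \<noteq> {}" "finite (Cls (k - j))" using ne[OF kj] sub[OF kj] finite_subset by blast+
    show ?thesis
    proof (rule replicate_eqI)
      show "length (map ?g [s j..<s (Suc j)]) = 1 + rr (k - j)"
        using s_Suc[of j] cne by (simp add: card_gt_0_iff)
      fix y assume "y \<in> set (map ?g [s j..<s (Suc j)])"
      then obtain x where x: "x \<in> Cls (k - j)" "y = ?g x" using I by auto
      have "psi x = m + j" using psi[OF kj x(1)] jk by simp
      then show "y = w ! (length w - k + j)" using x(2) len m1 by simp
    qed
  qed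
  have bl: "map (\<lambda>j. map ?g [s j..<s (Suc j)]) [0..<k] =
     map (\<lambda>j. replicate (1 + rr (k - j)) (w ! (length w - k + j))) [0..<k]"
    by (rule map_cong[OF refl blocks])
  have "map ?g [1..<n+1] = take (length w - k) w @
     concat (map (\<lambda>j. replicate (1 + rr (k - j)) (w ! (length w - k + j))) [0..<k])"
    unfolding split map_append p1 mid map_concat map_map comp_def bl by (rule refl)
  then show ?thesis unfolding ind_word_def by simp
qed

declare upt_Suc[simp del]

lemma main_loc:
  assumes sch: "sched_on n S'"
  shows "gf n (Conj S' (Neg (edge_clause I))) u = induce k rr (gf (m + k - 1) (contraction m k Cls S')) u"
proof -
  define N where "N = m + k - 1"
  define G where "G = gf N (contraction m k Cls S')"
  define A where "A = {w. k \<le> length w \<and> ind_word k rr w = u}"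
  define P where "P = (length u = n \<and> (\<forall>a\<in>set u. 0 < a) \<and> holds (\<lambda>i. u ! (i - 1)) S' \<and>
     (\<forall>(a,b)\<in>set I. u ! (a - 1) = u ! (b - 1)))"
  have vS: "vars S' \<subseteq> {1..n}" using sch unfolding sched_on_def .
  have VI: "\<And>a b. (a,b) \<in> set I \<Longrightarrow> a \<in> {m..n} \<and> b \<in> {m..n}" using V unfolding Vc_def by force
  have LHS: "gf n (Conj S' (Neg (edge_clause I))) u = (if P then 1 else 0)"
    unfolding gf_def P_def by (auto simp: holds_edge)
  have finA: "finite A" unfolding A_def by (rule ind_word_finite)
  have G01: "G w = (if length w = N \<and> (\<forall>a\<in>set w. 0 < a) \<and> holds ((\<lambda>i. w ! (i - 1)) \<circ> psi) S' then 1 else 0)" for w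
    unfolding G_def gf_def contraction_def holds_rename by simp
  have K: "P \<and> length w = N \<and> (\<forall>i\<in>{1..n}. u ! (i - 1) = w ! (psi i - 1))"
    if wA: "w \<in> A" and Gw: "G w \<noteq> 0" for w
  proof -
    have lw: "length w = N" and pos: "\<forall>a\<in>set w. 0 < a" and hw: "holds ((\<lambda>i. w ! (i - 1)) \<circ> psi) S'"
      using Gw G01[of w] by (auto split: if_splits)
    have ueq: "u = map (\<lambda>i. w ! (psi i - 1)) [1..<n+1]"
      using wA ind_word_eq[of w] lw unfolding A_def N_def by simp
    have lu: "length u = n" using ueq by simp
    have nth: "\<forall>i\<in>{1..n}. u ! (i - 1) = w ! (psi i - 1)"
    proof
      fix i assume i: "i \<in> {1..n}"
      then have "u ! (i - 1) = map (\<lambda>i. w ! (psi i - 1)) [1..<n+1] ! (i - 1)" using ueq by simp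
      also have "\<dots> = w ! (psi i - 1)"
      proof -
        have "i - 1 < length [1..<n+1]" using i by auto
        moreover have "[1..<n+1] ! (i - 1) = i" using i by (subst nth_upt) auto
        ultimately show ?thesis by simp
      qed
      finally show "u ! (i - 1) = w ! (psi i - 1)" .
    qed
    have posu: "\<forall>a\<in>set u. 0 < a"
    proof
      fix a assume "a \<in> set u"
      then obtain p where p: "p < n" "a = u ! p" using lu by (auto simp: in_set_conv_nth)
      then have "a = w ! (psi (p+1) - 1)" using nth[rule_format, of "p+1"] by simp
      moreover have "psi (p+1) \<in> {1..N}" using psi_range[of "p+1"] p unfolding N_def by simp
      ultimately have "a \<in> set w" using lw by auto
      then show "0 < a" using pos by blast
    qed
    have hu: "holds (\<lambda>i. u ! (i - 1)) S'"
    proof -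
      have "holds (\<lambda>i. u ! (i - 1)) S' = holds ((\<lambda>i. w ! (i - 1)) \<circ> psi) S'"
        using vS nth by (intro holds_cong) auto
      then show ?thesis using hw by simp
    qed
    have eu: "\<forall>(a,b)\<in>set I. u ! (a - 1) = u ! (b - 1)"
    proof (clarify)
      fix a b assume ab: "(a,b) \<in> set I"
      then obtain j where j: "j \<in> {1..k}" "a \<in> Cls j" "b \<in> Cls j" using edge_class by blast
      have "psi a = psi b" using psi[OF j(1) j(2)] psi[OF j(1) j(3)] by simp
      moreover have "a \<in> {1..n}" "b \<in> {1..n}" using VI[OF ab] m1 by auto
      ultimately show "u ! (a - 1) = u ! (b - 1)" using nth by metis
    qed
    show ?thesis using lu posu hu eu lw nth unfolding P_def by simp
  qed
  show ?thesis
  proof (cases P)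
    case False
    have "sum G A = 0" using K False by (intro sum.neutral) blast
    then show ?thesis using LHS False unfolding induce_def G_def A_def N_def by simp
  next
    case True
    have lu: "length u = n" and posu: "\<forall>a\<in>set u. 0 < a" and hu: "holds (\<lambda>i. u ! (i - 1)) S'"
      and eu: "\<forall>(a,b)\<in>set I. u ! (a - 1) = u ! (b - 1)" using True unfolding P_def by auto
    have fiber: "u ! (i - 1) = u ! (i' - 1)"
      if i: "i \<in> {1..n}" and i': "i' \<in> {1..n}" and eq: "psi i = psi i'" for i i'
    proof (cases "i < m")
      case True
      have "i' < m"
      proof (rule ccontr)
        assume "\<not> i' < m"
        then obtain j where j: "j \<in> {1..k}" "i' \<in> Cls j" using cover i' by (metis atLeastAtMost_iff not_less)
        then show False using psi[OF j] psi_low[OF True] eq True j(1) by auto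
      qed
      then show ?thesis using True eq psi_low by simp
    next
      case False
      then obtain j where j: "j \<in> {1..k}" "i \<in> Cls j" using cover i by (metis atLeastAtMost_iff not_less)
      have "\<not> i' < m"
      proof
        assume "i' < m"
        then show False using psi[OF j] psi_low[of i'] eq False j(1) by auto
      qed
      then obtain j' where j': "j' \<in> {1..k}" "i' \<in> Cls j'" using cover i' by (metis atLeastAtMost_iff not_less)
      have "j = j'" using psi[OF j] psi[OF j'] eq j j' by auto
      then have "(i, i') \<in> (set I \<union> (set I)\<inverse>)\<^sup>*" using same_class j j' by blast
      then show ?thesis using path_eq[of i i' I "\<lambda>i. u ! (i - 1)"] eu by blast
    qed
    define rep where "rep p = (SOME i. i \<in> {1..n} \<and> psi i = p)" for p
    have rep: "rep p \<in> {1..n} \<and> psi (rep p) = p" if pN: "p \<in> {1..N}" for p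
    proof -
      obtain i where i: "i \<in> {1..n}" "psi i = p" using psi_surj[of p] pN unfolding N_def by blast
      show ?thesis unfolding rep_def using someI[of "\<lambda>i. i \<in> {1..n} \<and> psi i = p" i] i by blast
    qed
    define w0 where "w0 = map (\<lambda>p. u ! (rep p - 1)) [1..<N+1]"
    have lw0: "length w0 = N" unfolding w0_def by simp
    have w0nth: "w0 ! (psi i - 1) = u ! (i - 1)" if i: "i \<in> {1..n}" for i
    proof -
      have pr: "psi i \<in> {1..N}" using psi_range[OF i] unfolding N_def .
      then have "w0 ! (psi i - 1) = u ! (rep (psi i) - 1)" unfolding w0_def by (rule map_upt_nth1)
      also have "\<dots> = u ! (i - 1)" using fiber[of "rep (psi i)" i] rep[OF pr] i by simp
      finally show ?thesis .
    qed
    have indw0: "ind_word k rr w0 = u"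
    proof -
      have "ind_word k rr w0 = map (\<lambda>i. w0 ! (psi i - 1)) [1..<n+1]"
        using ind_word_eq lw0 unfolding N_def by simp
      also have "\<dots> = map (\<lambda>i. u ! (i - 1)) [1..<n+1]" using w0nth by (intro map_cong) auto
      also have "\<dots> = u"
      proof (rule nth_equalityI)
        show "length (map (\<lambda>i. u ! (i - 1)) [1..<n+1]) = length u" using lu by simp
        fix p assume "p < length (map (\<lambda>i. u ! (i - 1)) [1..<n+1])"
        then have "p + 1 \<in> {1..n}" by simp
        from map_upt_nth1[OF this, of "\<lambda>i. u ! (i - 1)"]
        show "map (\<lambda>i. u ! (i - 1)) [1..<n+1] ! p = u ! p" by simp
      qed
      finally show ?thesis .
    qed
    have w0A: "w0 \<in> A" unfolding A_def using indw0 lw0 m1 unfolding N_def by simp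
    have Gw0: "G w0 = 1"
    proof -
      have "\<forall>a\<in>set w0. 0 < a"
      proof
        fix a assume "a \<in> set w0"
        then obtain p where p: "p \<in> {1..N}" "a = u ! (rep p - 1)" unfolding w0_def by (auto simp: less_Suc_eq_le)
        then have "a \<in> set u" using rep[OF p(1)] lu by auto
        then show "0 < a" using posu by blast
      qed
      moreover have "holds ((\<lambda>i. w0 ! (i - 1)) \<circ> psi) S'"
      proof -
        have "holds ((\<lambda>i. w0 ! (i - 1)) \<circ> psi) S' = holds (\<lambda>i. u ! (i - 1)) S'"
          using vS w0nth by (intro holds_cong) auto
        then show ?thesis using hu by simp
      qed
      ultimately show ?thesis using G01[of w0] lw0 by simp
    qed
    have others: "G w = 0" if w: "w \<in> A - {w0}" for w
    proof (rule ccontr)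
      assume "G w \<noteq> 0"
      then have Kw: "length w = N" "\<forall>i\<in>{1..n}. u ! (i - 1) = w ! (psi i - 1)" using K w by auto
      have "w = w0"
      proof (rule nth_equalityI)
        show "length w = length w0" using Kw lw0 by simp
        fix p assume p: "p < length w"
        then have p1: "p + 1 \<in> {1..N}" using Kw by simp
        have "w ! p = w ! (psi (rep (p+1)) - 1)" using rep[OF p1] by simp
        also have "\<dots> = u ! (rep (p+1) - 1)" using Kw(2) rep[OF p1] by simp
        also have "\<dots> = w0 ! p" unfolding w0_def using map_upt_nth1[OF p1, of "\<lambda>p. u ! (rep p - 1)"] by simp
        finally show "w ! p = w0 ! p" .
      qed
      then show False using w by simp
    qed
    have "sum G A = G w0 + sum G (A - {w0})" using finA w0A by (simp add: sum.remove)
    also have "\<dots> = 1" using Gw0 others by simp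
    finally show ?thesis using LHS True unfolding induce_def G_def A_def N_def by simp
  qed
qed

end

theorem lemma3p7:
  fixes n m k :: nat and S' :: sform and I :: "(nat \<times> nat) list"
    and Cls :: "nat \<Rightarrow> nat set"
  assumes "sched_on n S'"
    and "contractible I n"
    and "Vc I = {m..n}"
    and "ordered_classes I k Cls"
  shows "gf n (Conj S' (Neg (edge_clause I))) =
         induce k (\<lambda>i. card (Cls i) - 1)
           (gf (n - (\<Sum>i=1..k. card (Cls i) - 1)) (contraction m k Cls S'))"
proof -
  from assms(2) obtain m0 where m0: "1 \<le> m0" "m0 \<le> n" "Vc I = {m0..n}"
    unfolding contractible_def by auto
  have "m0 \<in> {m..n}" "m \<in> {m0..n}" using m0 assms(3) by (metis atLeastAtMost_iff order_refl)+
  then have mm: "m = m0" by simp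
  interpret cset n m k I Cls
    using mm m0 assms(3,4) by unfold_locales auto
  show ?thesis
    using main_loc[OF assms(1)] Nprime by (intro ext) simp
qed

end
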